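(* For every $n\ge 2$, let $\mathsf D_n=\{x\in\mathbb Z^n:\sum_i x_i\equiv 0\bmod 2\}$ and $t=\lfloor (n-2)/2\rfloor$. Then the set of isomorphism types of the groups $\mathsf D_n/\Lambda'$, where $\Lambda'$ runs through the sublattices of $\mathsf D_n$ generated by $n$ linearly independent minimal vectors of $\mathsf D_n$, is exactly $\{(\mathbb Z/2\mathbb Z)^k: 0\le k\le t\}$.
   Context: Minimal vectors of a lattice are its nonzero vectors of smallest norm $x\cdot x$ (for $\mathsf D_n$ these are the vectors $\pm\varepsilon_i\pm\varepsilon_j$, $i\ne j$). In the paper this set is written $\{1,2,\dots,2^t\}$, where $2^k$ denotes $(\mathbb Z/2\mathbb Z)^k$. *)

theory Defs
  imports "HOL-Algebra.Algebra"
begin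

text \<open>Vectors of Z^n are represented as functions nat => int vanishing outside {0..<n}.\<close>

definition zvec :: "nat \<Rightarrow> (nat \<Rightarrow> int) set" where
  "zvec n = {x. \<forall>i\<ge>n. x i = 0}"

definition Dlat :: "nat \<Rightarrow> (nat \<Rightarrow> int) set" where
  "Dlat n = {x \<in> zvec n. even (\<Sum>i<n. x i)}"

definition znorm :: "nat \<Rightarrow> (nat \<Rightarrow> int) \<Rightarrow> int" where
  "znorm n x = (\<Sum>i<n. x i * x i)"

definition min_vectors :: "nat \<Rightarrow> (nat \<Rightarrow> int) set \<Rightarrow> (nat \<Rightarrow> int) set" where
  "min_vectors n L = {v \<in> L. v \<noteq> (\<lambda>_. 0) \<and> (\<forall>w\<in>L. w \<noteq> (\<lambda>_. 0) \<longrightarrow> znorm n v \<le> znorm n w)}"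

definition lin_indep :: "nat \<Rightarrow> nat \<Rightarrow> (nat \<Rightarrow> nat \<Rightarrow> int) \<Rightarrow> bool" where
  "lin_indep n m v \<longleftrightarrow>
     (\<forall>c :: nat \<Rightarrow> real. (\<forall>i<n. (\<Sum>j<m. c j * real_of_int (v j i)) = 0) \<longrightarrow> (\<forall>j<m. c j = 0))"

definition int_span :: "nat \<Rightarrow> (nat \<Rightarrow> nat \<Rightarrow> int) \<Rightarrow> (nat \<Rightarrow> int) set" where
  "int_span m v = {x. \<exists>c :: nat \<Rightarrow> int. x = (\<lambda>i. \<Sum>j<m. c j * v j i)}"

definition Dgroup :: "nat \<Rightarrow> (nat \<Rightarrow> int) monoid" where
  "Dgroup n = \<lparr>carrier = Dlat n, monoid.mult = (\<lambda>x y i. x i + y i), one = (\<lambda>_. 0)\<rparr>"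

text \<open>The elementary abelian group (Z/2Z)^k, as 0/1-vectors of length k with addition mod 2.\<close>
definition elem2 :: "nat \<Rightarrow> (nat \<Rightarrow> int) monoid" where
  "elem2 k = \<lparr>carrier = {f. (\<forall>i. f i \<in> {0, 1}) \<and> (\<forall>i\<ge>k. f i = 0)},
              monoid.mult = (\<lambda>f g i. (f i + g i) mod 2), one = (\<lambda>_. 0)\<rparr>"

end

theory Submission
  imports Defs "Jordan_Normal_Form.Determinant"
begin


lemma kernel_swap:
  fixes A :: "nat \<Rightarrow> nat \<Rightarrow> real"
  assumes "i0 < n" "u i0 \<noteq> 0" "\<forall>j<n. (\<Sum>i<n. A j i * u i) = 0"
  shows "\<exists>c. (\<exists>j<n. c j \<noteq> 0) \<and> (\<forall>i<n. (\<Sum>j<n. c j * A j i) = 0)"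
proof -
  define M where "M = mat n n (\<lambda>(j,i). A j i)"
  have M: "M \<in> carrier_mat n n" unfolding M_def by simp
  have "M *\<^sub>v vec n u = 0\<^sub>v n"
    using assms(3) by (auto simp: M_def mult_mat_vec_def scalar_prod_def atLeast0LessThan)
  moreover have "vec n u \<noteq> 0\<^sub>v n"
  proof
    assume "vec n u = 0\<^sub>v n"
    hence "vec n u $ i0 = 0\<^sub>v n $ i0" by simp
    with assms(1,2) show False by simp
  qed
  ultimately have "det M = 0" using det_0_iff_vec_prod_zero[OF M] vec_carrier[of n u] by blast
  hence "det (transpose_mat M) = 0" using det_transpose[OF M] by simp
  then obtain w where w: "w \<in> carrier_vec n" "w \<noteq> 0\<^sub>v n" "transpose_mat M *\<^sub>v w = 0\<^sub>v n"
    using det_0_iff_vec_prod_zero[of "transpose_mat M" n] M by auto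
  from w(1,2) obtain j where j: "j < n" "w $ j \<noteq> 0"
    by (metis carrier_vecD eq_vecI index_zero_vec(1) index_zero_vec(2))
  have "\<forall>i<n. (\<Sum>j<n. w $ j * A j i) = 0"
  proof (intro allI impI)
    fix i assume i: "i < n"
    have "(transpose_mat M *\<^sub>v w) $ i = 0" using w(3) i by simp
    thus "(\<Sum>j<n. w $ j * A j i) = 0"
      using i w(1) by (auto simp: M_def mult_mat_vec_def scalar_prod_def atLeast0LessThan mult.commute)
  qed
  thus ?thesis using j by (intro exI[of _ "\<lambda>j. w $ j"]) auto
qed

definition ev :: "nat \<Rightarrow> nat \<Rightarrow> int" where "ev a = (\<lambda>x. if x = a then 1 else 0)"

lemma span_gen: "j < m \<Longrightarrow> v j \<in> int_span m v"
  unfolding int_span_def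
proof (rule CollectI, rule exI[of _ "\<lambda>k. if k = j then 1 else 0"])
  assume j: "j < m"
  have "\<And>k i. (if k = j then 1 else 0) * v k i = (if k = j then v j i else 0)" by simp
  thus "v j = (\<lambda>i. \<Sum>k<m. (if k = j then 1 else 0) * v k i)" using j by (simp add: fun_eq_iff)
qed

lemma span_add: "x \<in> int_span m v \<Longrightarrow> y \<in> int_span m v \<Longrightarrow> (\<lambda>i. x i + y i) \<in> int_span m v"
proof -
  assume "x \<in> int_span m v" "y \<in> int_span m v"
  then obtain c d where "x = (\<lambda>i. \<Sum>j<m. c j * v j i)" "y = (\<lambda>i. \<Sum>j<m. d j * v j i)"
    unfolding int_span_def by auto
  thus ?thesis unfolding int_span_def
    by (intro CollectI exI[of _ "\<lambda>j. c j + d j"]) (auto simp: sum.distrib algebra_simps)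
qed

lemma span_smult: "x \<in> int_span m v \<Longrightarrow> (\<lambda>i. k * x i) \<in> int_span m v"
proof -
  assume "x \<in> int_span m v"
  then obtain c where "x = (\<lambda>i. \<Sum>j<m. c j * v j i)"
    unfolding int_span_def by auto
  thus ?thesis unfolding int_span_def
    by (intro CollectI exI[of _ "\<lambda>j. k * c j"]) (auto simp: sum_distrib_left algebra_simps)
qed

lemma span_zero: "(\<lambda>i. 0) \<in> int_span m v"
  unfolding int_span_def by (intro CollectI exI[of _ "\<lambda>j. 0"]) auto

lemma span_diff: "x \<in> int_span m v \<Longrightarrow> y \<in> int_span m v \<Longrightarrow> (\<lambda>i. x i - y i) \<in> int_span m v"
  using span_add[of x m v "\<lambda>i. (-1) * y i"] span_smult[of y m v "-1"] by simp

lemma span_sum: "finite A \<Longrightarrow> (\<forall>a\<in>A. x a \<in> int_span m v) \<Longrightarrow> (\<lambda>i. \<Sum>a\<in>A. x a i) \<in> int_span m v"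
proof (induction A rule: finite_induct)
  case empty thus ?case using span_zero by simp
next
  case (insert a A)
  thus ?case using span_add[of "x a" m v "\<lambda>i. \<Sum>a\<in>A. x a i"] by simp
qed

lemma span_eq: "x \<in> int_span m v \<Longrightarrow> (\<And>i. x i = y i) \<Longrightarrow> y \<in> int_span m v"
proof -
  assume "x \<in> int_span m v" "\<And>i. x i = y i"
  hence "x = y" by auto
  thus ?thesis using \<open>x \<in> int_span m v\<close> by simp
qed

lemma dep:
  assumes "i0 < n" "u i0 \<noteq> 0" "\<forall>j<n. (\<Sum>i<n. u i * real_of_int (v j i)) = 0"
  shows "\<not> lin_indep n n v"
proof -
  obtain c where c: "\<exists>j<n. c j \<noteq> 0" "\<forall>i<n. (\<Sum>j<n. c j * real_of_int (v j i)) = 0"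
    using kernel_swap[of i0 n u "\<lambda>j i. real_of_int (v j i)"] assms by (auto simp: mult.commute)
  thus ?thesis unfolding lin_indep_def by blast
qed

lemma indep:
  assumes "\<forall>z<n. (\<lambda>x. 2 * ev z x) \<in> int_span n v"
  shows "lin_indep n n v"
proof (rule ccontr)
  assume "\<not> lin_indep n n v"
  then obtain c j0 where c: "\<forall>i<n. (\<Sum>j<n. c j * real_of_int (v j i)) = 0" "j0 < n" "c j0 \<noteq> 0"
    unfolding lin_indep_def by blast
  obtain w where w: "\<exists>z<n. w z \<noteq> 0" "\<forall>j<n. (\<Sum>x<n. w x * real_of_int (v j x)) = 0"
    using kernel_swap[of j0 n c "\<lambda>i j. real_of_int (v j i)"] c by (auto simp: mult.commute)
  then obtain z where z: "z < n" "w z \<noteq> 0" by blast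
  obtain d where d: "(\<lambda>x. 2 * ev z x) = (\<lambda>x. \<Sum>j<n. d j * v j x)"
    using assms z(1) unfolding int_span_def by blast
  have "2 * w z = (\<Sum>x<n. w x * real_of_int (2 * ev z x))"
    using z(1) by (simp add: ev_def if_distrib cong: if_cong)
  also have "\<dots> = (\<Sum>x<n. w x * (\<Sum>j<n. real_of_int (d j) * real_of_int (v j x)))"
  proof (intro sum.cong refl)
    fix x
    have "2 * ev z x = (\<Sum>j<n. d j * v j x)" using d by metis
    hence "real_of_int (2 * ev z x) = real_of_int (\<Sum>j<n. d j * v j x)" by (rule arg_cong)
    thus "w x * real_of_int (2 * ev z x) = w x * (\<Sum>j<n. real_of_int (d j) * real_of_int (v j x))"
      by (simp only: of_int_sum of_int_mult)
  qed
  also have "\<dots> = (\<Sum>x<n. \<Sum>j<n. real_of_int (d j) * (w x * real_of_int (v j x)))"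
    by (simp add: sum_distrib_left mult.left_commute)
  also have "\<dots> = (\<Sum>j<n. \<Sum>x<n. real_of_int (d j) * (w x * real_of_int (v j x)))"
    by (rule sum.swap)
  also have "\<dots> = (\<Sum>j<n. real_of_int (d j) * (\<Sum>x<n. w x * real_of_int (v j x)))"
    by (simp add: sum_distrib_left)
  also have "\<dots> = 0" using w(2) by simp
  finally show False using z(2) by simp
qed

definition root :: "nat \<Rightarrow> nat \<Rightarrow> int \<Rightarrow> int \<Rightarrow> nat \<Rightarrow> int" where
  "root a b \<sigma> \<tau> = (\<lambda>x. \<sigma> * ev a x + \<tau> * ev b x)"

lemma sq_ge1: "(k::int) \<noteq> 0 \<Longrightarrow> 1 \<le> k * k"
  by (metis abs_ge_self abs_mult_self_eq abs_of_nonneg dual_order.trans linorder_not_less mult_le_cancel_left1 zero_less_abs_iff zero_less_one_class.zero_le_one int_one_le_iff_zero_less abs_le_square_iff le_square)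

lemma sq_ne2: "(k::int) * k \<noteq> 2"
proof
  assume h: "k * k = 2"
  show False
  proof (cases "\<bar>k\<bar> \<le> 1")
    case True
    hence "\<bar>k\<bar> * \<bar>k\<bar> \<le> 1" by (metis abs_ge_zero mult_le_one)
    thus False using h by (simp add: abs_mult[symmetric])
  next
    case False
    hence "2 \<le> \<bar>k\<bar>" by simp
    hence "2 * 2 \<le> \<bar>k\<bar> * \<bar>k\<bar>" by (intro mult_mono) auto
    thus False using h by (simp add: abs_mult[symmetric])
  qed
qed

lemma sq1: "(k::int) * k = 1 \<Longrightarrow> k \<in> {1, -1}"
  using power2_eq_1_iff[of k] by (simp add: power2_eq_square)

lemma zvec_out: "x \<in> zvec n \<Longrightarrow> n \<le> i \<Longrightarrow> x i = 0"
  unfolding zvec_def by auto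

lemma norm_even: "x \<in> Dlat n \<Longrightarrow> even (znorm n x)"
proof -
  assume "x \<in> Dlat n"
  hence e: "even (\<Sum>i<n. x i)" unfolding Dlat_def by auto
  have "even (\<Sum>i<n. x i * x i - x i)"
    by (intro dvd_sum) auto
  hence "even ((\<Sum>i<n. x i * x i) - (\<Sum>i<n. x i))" by (simp add: sum_subtractf)
  thus ?thesis using e unfolding znorm_def by (metis dvd_add_left_iff diff_add_cancel)
qed

lemma norm_ge1: "x \<in> zvec n \<Longrightarrow> x \<noteq> (\<lambda>_. 0) \<Longrightarrow> 1 \<le> znorm n x"
proof -
  assume z: "x \<in> zvec n" "x \<noteq> (\<lambda>_. 0)"
  then obtain i where i: "x i \<noteq> 0" by auto
  hence "i < n" using zvec_out[OF z(1)] by (meson not_less)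
  have 1: "1 \<le> x i * x i" using sq_ge1 i by simp
  have 2: "x i * x i \<le> (\<Sum>j<n. x j * x j)"
    using \<open>i < n\<close> by (rule_tac member_le_sum) auto
  show ?thesis unfolding znorm_def using 1 2 by linarith
qed

lemma norm_ge2: "x \<in> Dlat n \<Longrightarrow> x \<noteq> (\<lambda>_. 0) \<Longrightarrow> 2 \<le> znorm n x"
proof -
  assume "x \<in> Dlat n" "x \<noteq> (\<lambda>_. 0)"
  hence "1 \<le> znorm n x" "even (znorm n x)"
    using norm_ge1 norm_even unfolding Dlat_def by auto
  thus ?thesis by presburger
qed

lemma sum_ev: "finite A \<Longrightarrow> (\<Sum>i\<in>A. f i * ev a i) = (if a \<in> A then f a else 0)"
proof -
  assume fin: "finite A"
  have "(\<Sum>i\<in>A. f i * ev a i) = (\<Sum>i\<in>A. if i = a then f a else 0)"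
    by (intro sum.cong) (auto simp: ev_def)
  thus ?thesis using fin by simp
qed

lemma sum_ev1: "finite A \<Longrightarrow> (\<Sum>i\<in>A. ev a i) = (if a \<in> A then 1 else 0)"
  using sum_ev[of A "\<lambda>_. 1" a] by auto

lemma root_min:
  assumes "a < n" "b < n" "a \<noteq> b" "\<sigma> \<in> {1,-1}" "\<tau> \<in> {1,-1}"
  shows "root a b \<sigma> \<tau> \<in> min_vectors n (Dlat n)"
proof -
  have z: "root a b \<sigma> \<tau> \<in> zvec n" using assms unfolding zvec_def root_def ev_def by auto
  have s: "(\<Sum>i<n. root a b \<sigma> \<tau> i) = \<sigma> + \<tau>"
    using assms by (simp add: root_def sum.distrib sum_distrib_left[symmetric] sum_ev1)
  have ev: "even (\<sigma> + \<tau>)" using assms by auto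
  have nz: "root a b \<sigma> \<tau> \<noteq> (\<lambda>_. 0)"
  proof
    assume "root a b \<sigma> \<tau> = (\<lambda>_. 0)"
    hence "root a b \<sigma> \<tau> a = 0" by simp
    thus False using assms by (auto simp: root_def ev_def)
  qed
  have "\<And>i. root a b \<sigma> \<tau> i * root a b \<sigma> \<tau> i = ev a i + ev b i"
    using assms by (auto simp: root_def ev_def)
  hence n2: "znorm n (root a b \<sigma> \<tau>) = 2"
    using assms unfolding znorm_def by (simp add: sum.distrib sum_ev1)
  show ?thesis unfolding min_vectors_def
    using z s ev nz n2 norm_ge2 unfolding Dlat_def by auto
qed

lemma root_norm:
  assumes "a < n" "b < n" "a \<noteq> b" "\<sigma> \<in> {1,-1}" "\<tau> \<in> {1,-1}"
  shows "znorm n (root a b \<sigma> \<tau>) = 2"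
proof -
  have "\<And>i. root a b \<sigma> \<tau> i * root a b \<sigma> \<tau> i = ev a i + ev b i"
    using assms by (auto simp: root_def ev_def)
  thus ?thesis
    using assms unfolding znorm_def by (simp add: sum.distrib sum_ev1)
qed

lemma min_form:
  assumes "n \<ge> 2" "v \<in> min_vectors n (Dlat n)"
  shows "\<exists>a b \<sigma> \<tau>. a < n \<and> b < n \<and> a \<noteq> b \<and> \<sigma> \<in> {1,-1} \<and> \<tau> \<in> {1,-1} \<and> v = root a b \<sigma> \<tau>"
proof -
  have r: "root 0 1 1 1 \<in> Dlat n" "root 0 1 1 1 \<noteq> (\<lambda>_. 0)" "znorm n (root 0 1 1 1) = 2"
    using root_min[of 0 n 1 1 1] root_norm[of 0 n 1 1 1] assms(1) unfolding min_vectors_def by auto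
  have vD: "v \<in> Dlat n" "v \<noteq> (\<lambda>_. 0)" and le: "znorm n v \<le> znorm n (root 0 1 1 1)"
    using assms(2) r unfolding min_vectors_def by auto
  have vz: "v \<in> zvec n" using vD unfolding Dlat_def by auto
  have n2: "znorm n v = 2" using le r norm_ge2[OF vD] by simp
  define S where "S = {i. i < n \<and> v i \<noteq> 0}"
  have finS: "finite S" unfolding S_def by simp
  have sumS: "znorm n v = (\<Sum>i\<in>S. v i * v i)"
    unfolding znorm_def by (rule sum.mono_neutral_right) (auto simp: S_def)
  have "(\<Sum>i\<in>S. 1) \<le> (\<Sum>i\<in>S. v i * v i)"
    by (rule sum_mono) (auto simp: S_def sq_ge1)
  hence cS: "int (card S) \<le> 2" using sumS n2 by simp
  obtain i where i: "v i \<noteq> 0" using vD(2) by auto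
  hence "i \<in> S" using zvec_out[OF vz, of i] unfolding S_def by (auto simp: not_less[symmetric])
  hence "card S \<noteq> 0" using finS by auto
  hence "card S = 1 \<or> card S = 2" using cS by linarith
  thus ?thesis
  proof
    assume "card S = 1"
    then obtain a where "S = {a}" by (rule card_1_singletonE)
    hence "v a * v a = 2" using sumS n2 by simp
    thus ?thesis using sq_ne2 by blast
  next
    assume "card S = 2"
    then obtain a b where ab: "S = {a, b}" "a \<noteq> b" by (auto simp: card_2_iff)
    hence s2: "v a * v a + v b * v b = 2" using sumS n2 by simp
    have "v a \<noteq> 0" "v b \<noteq> 0" "a < n" "b < n" using ab unfolding S_def by auto
    hence "1 \<le> v a * v a" "1 \<le> v b * v b" using sq_ge1 by auto
    hence "v a * v a = 1" "v b * v b = 1" using s2 by linarith+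
    hence pm: "v a \<in> {1,-1}" "v b \<in> {1,-1}" using sq1 by auto
    have "v = root a b (v a) (v b)"
    proof
      fix x
      show "v x = root a b (v a) (v b) x"
      proof (cases "x = a \<or> x = b")
        case True thus ?thesis using ab(2) by (auto simp: root_def ev_def)
      next
        case False
        hence "x \<notin> S" using ab by auto
        hence "v x = 0" using zvec_out[OF vz, of x] unfolding S_def by (auto simp: not_less[symmetric])
        thus ?thesis using False by (auto simp: root_def ev_def)
      qed
    qed
    thus ?thesis using ab pm \<open>a < n\<close> \<open>b < n\<close> by blast
  qed
qed

lemma group_D: "group (Dgroup n)"
proof (rule groupI)
  fix x y assume "x \<in> carrier (Dgroup n)" "y \<in> carrier (Dgroup n)"
  thus "x \<otimes>\<^bsub>Dgroup n\<^esub> y \<in> carrier (Dgroup n)"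
    by (auto simp: Dgroup_def Dlat_def zvec_def sum.distrib)
next
  show "\<one>\<^bsub>Dgroup n\<^esub> \<in> carrier (Dgroup n)" by (auto simp: Dgroup_def Dlat_def zvec_def)
next
  fix x y z assume "x \<in> carrier (Dgroup n)" "y \<in> carrier (Dgroup n)" "z \<in> carrier (Dgroup n)"
  thus "x \<otimes>\<^bsub>Dgroup n\<^esub> y \<otimes>\<^bsub>Dgroup n\<^esub> z = x \<otimes>\<^bsub>Dgroup n\<^esub> (y \<otimes>\<^bsub>Dgroup n\<^esub> z)"
    by (auto simp: Dgroup_def)
next
  fix x assume "x \<in> carrier (Dgroup n)"
  thus "\<one>\<^bsub>Dgroup n\<^esub> \<otimes>\<^bsub>Dgroup n\<^esub> x = x" by (auto simp: Dgroup_def)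
next
  fix x assume x: "x \<in> carrier (Dgroup n)"
  have "(\<lambda>i. - x i) \<in> carrier (Dgroup n)"
    using x by (auto simp: Dgroup_def Dlat_def zvec_def sum_negf)
  moreover have "(\<lambda>i. - x i) \<otimes>\<^bsub>Dgroup n\<^esub> x = \<one>\<^bsub>Dgroup n\<^esub>" by (auto simp: Dgroup_def)
  ultimately show "\<exists>y\<in>carrier (Dgroup n). y \<otimes>\<^bsub>Dgroup n\<^esub> x = \<one>\<^bsub>Dgroup n\<^esub>" by blast
qed

lemma mod2_assoc: "(((a::int) + b) mod 2 + c) mod 2 = (a + (b + c) mod 2) mod 2"
  by (simp add: mod_add_left_eq mod_add_right_eq add.assoc)

lemma mod2_id: "(a::int) \<in> {0,1} \<Longrightarrow> a mod 2 = a"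
  by auto

lemma mod2_self: "((a::int) + a) mod 2 = 0"
  by presburger

lemma group_E: "group (elem2 k)"
proof (rule groupI)
  fix x y assume "x \<in> carrier (elem2 k)" "y \<in> carrier (elem2 k)"
  thus "x \<otimes>\<^bsub>elem2 k\<^esub> y \<in> carrier (elem2 k)"
    by (auto simp: elem2_def)
next
  show "\<one>\<^bsub>elem2 k\<^esub> \<in> carrier (elem2 k)" by (auto simp: elem2_def)
next
  fix x y z assume "x \<in> carrier (elem2 k)" "y \<in> carrier (elem2 k)" "z \<in> carrier (elem2 k)"
  show "x \<otimes>\<^bsub>elem2 k\<^esub> y \<otimes>\<^bsub>elem2 k\<^esub> z = x \<otimes>\<^bsub>elem2 k\<^esub> (y \<otimes>\<^bsub>elem2 k\<^esub> z)"
    by (simp add: elem2_def mod2_assoc)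
next
  fix x assume x: "x \<in> carrier (elem2 k)"
  show "\<one>\<^bsub>elem2 k\<^esub> \<otimes>\<^bsub>elem2 k\<^esub> x = x"
  proof -
    have "\<And>i. x i \<in> {0,1}" using x by (simp add: elem2_def)
    thus ?thesis by (simp add: elem2_def mod2_id)
  qed
next
  fix x assume x: "x \<in> carrier (elem2 k)"
  have "x \<otimes>\<^bsub>elem2 k\<^esub> x = \<one>\<^bsub>elem2 k\<^esub>"
    by (simp add: elem2_def mod2_self)
  thus "\<exists>y\<in>carrier (elem2 k). y \<otimes>\<^bsub>elem2 k\<^esub> x = \<one>\<^bsub>elem2 k\<^esub>" using x by blast
qed

definition csum :: "nat \<Rightarrow> (nat \<Rightarrow> nat) \<Rightarrow> nat \<Rightarrow> (nat \<Rightarrow> int) \<Rightarrow> int" where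
  "csum n f m x = (\<Sum>i\<in>{i. i < n \<and> f i = m}. x i)"

lemma csum_add: "csum n f m (\<lambda>i. x i + y i) = csum n f m x + csum n f m y"
  unfolding csum_def by (simp add: sum.distrib)

lemma csum_total: "\<forall>i<n. f i < c \<Longrightarrow> (\<Sum>i<n. x i) = (\<Sum>m<c. csum n f m x)"
proof -
  assume a: "\<forall>i<n. f i < c"
  have "(\<Sum>m<c. \<Sum>i\<in>{i. i \<in> {..<n} \<and> f i = m}. x i) = (\<Sum>i<n. x i)"
    using a by (intro sum.group) auto
  thus ?thesis unfolding csum_def by simp
qed

lemma mod2_01: "(a::int) mod 2 \<in> {0,1}"
  by (cases "even a") auto

lemma Q1:
  assumes c1: "c \<ge> 1" and fc: "\<forall>i<n. f i < c" and q: "\<forall>m<c. q m < n \<and> f (q m) = m"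
  and L: "L = {x \<in> zvec n. \<forall>m<c. even (csum n f m x)}"
  shows "Dgroup n Mod L \<cong> elem2 (c-1)"
proof -
  define h where "h x = (\<lambda>m. if m < c-1 then csum n f m x mod 2 else 0)" for x
  have hom: "h \<in> hom (Dgroup n) (elem2 (c-1))"
  proof (rule homI)
    fix x show "h x \<in> carrier (elem2 (c-1))"
      unfolding h_def elem2_def using mod2_01 by auto
  next
    fix x y
    show "h (x \<otimes>\<^bsub>Dgroup n\<^esub> y) = h x \<otimes>\<^bsub>elem2 (c - 1)\<^esub> h y"
      unfolding h_def by (auto simp: Dgroup_def elem2_def fun_eq_iff csum_add mod_add_eq)
  qed
  have gh: "group_hom (Dgroup n) (elem2 (c-1)) h"
    unfolding group_hom_def group_hom_axioms_def using group_D group_E hom by blast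
  have qS: "\<And>m m'. m' < c \<Longrightarrow> (q m' \<in> {i. i < n \<and> f i = m}) = (m' = m)"
    using q by auto
  have surj: "h ` carrier (Dgroup n) = carrier (elem2 (c-1))"
  proof
    show "h ` carrier (Dgroup n) \<subseteq> carrier (elem2 (c-1))"
      using hom unfolding hom_def by auto
  next
    show "carrier (elem2 (c-1)) \<subseteq> h ` carrier (Dgroup n)"
    proof
      fix y assume y: "y \<in> carrier (elem2 (c-1))"
      define Y where "Y = (\<Sum>m<c-1. y m)"
      define x where "x = (\<lambda>i. (\<Sum>m<c-1. y m * ev (q m) i) + Y * ev (q (c-1)) i)"
      have qlt: "\<And>m. m < c \<Longrightarrow> q m < n" using q by auto
      have "x \<in> zvec n"
        unfolding zvec_def
      proof (intro CollectI allI impI)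
        fix i assume i: "n \<le> i"
        have e: "\<And>m. m < c \<Longrightarrow> ev (q m) i = 0" using qlt i by (fastforce simp: ev_def)
        have "ev (q (c-1)) i = 0" using e c1 by simp
        moreover have "\<forall>m<c-1. ev (q m) i = 0" using e by simp
        ultimately show "x i = 0" unfolding x_def by simp
      qed
      moreover have "(\<Sum>i<n. x i) = Y + Y"
      proof -
        have "(\<Sum>i<n. x i) = (\<Sum>m<c-1. y m * (\<Sum>i<n. ev (q m) i)) + Y * (\<Sum>i<n. ev (q (c-1)) i)"
          unfolding x_def by (simp add: sum.distrib sum_distrib_left sum.swap[of _ "{..<n}"])
        also have "\<dots> = Y + Y" using qlt c1 by (simp add: sum_ev1 Y_def)
        finally show ?thesis .
      qed
      ultimately have xc: "x \<in> carrier (Dgroup n)" by (simp add: Dgroup_def Dlat_def)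
      have "h x = y"
      proof
        fix m
        show "h x m = y m"
        proof (cases "m < c-1")
          case False thus ?thesis using y by (simp add: h_def elem2_def)
        next
          case True
          let ?S = "{i. i < n \<and> f i = m}"
          have "csum n f m x = (\<Sum>m'<c-1. y m' * (\<Sum>i\<in>?S. ev (q m') i)) + Y * (\<Sum>i\<in>?S. ev (q (c-1)) i)"
            unfolding x_def csum_def by (simp add: sum.distrib sum_distrib_left sum.swap[of _ ?S])
          also have "\<dots> = (\<Sum>m'<c-1. if m' = m then y m else 0)"
          proof -
            have a: "\<And>m'. m' < c \<Longrightarrow> (\<Sum>i\<in>?S. ev (q m') i) = (if m' = m then 1 else 0)"
              using qS by (simp add: sum_ev1)
            have "(\<Sum>i\<in>?S. ev (q (c-1)) i) = 0" using a[of "c-1"] True c1 by simp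
            moreover have "(\<Sum>m'<c-1. y m' * (\<Sum>i\<in>?S. ev (q m') i)) = (\<Sum>m'<c-1. if m' = m then y m else 0)"
              using a by (intro sum.cong) auto
            ultimately show ?thesis by simp
          qed
          also have "\<dots> = y m" using True by simp
          finally show ?thesis using True y mod2_id[of "y m"] by (simp add: h_def elem2_def)
        qed
      qed
      thus "y \<in> h ` carrier (Dgroup n)" using xc by blast
    qed
  qed
  have ker: "kernel (Dgroup n) (elem2 (c-1)) h = L"
  proof
    show "kernel (Dgroup n) (elem2 (c-1)) h \<subseteq> L"
    proof
      fix x assume "x \<in> kernel (Dgroup n) (elem2 (c-1)) h"
      hence x: "x \<in> Dlat n" "h x = (\<lambda>_. 0)" by (auto simp: kernel_def Dgroup_def elem2_def)
      have ev1: "\<And>m. m < c-1 \<Longrightarrow> even (csum n f m x)"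
      proof -
        fix m assume "m < c-1"
        hence "csum n f m x mod 2 = 0" using fun_cong[OF x(2), of m] by (simp add: h_def)
        thus "even (csum n f m x)" by presburger
      qed
      have tot: "even (\<Sum>m<c. csum n f m x)" using x(1) csum_total[OF fc] unfolding Dlat_def by auto
      have "(\<Sum>m<c. csum n f m x) = (\<Sum>m<c-1. csum n f m x) + csum n f (c-1) x"
        using c1 by (metis Suc_diff_1 less_le_trans less_numeral_extra(1) sum.lessThan_Suc)
      moreover have "even (\<Sum>m<c-1. csum n f m x)" using ev1 by (intro dvd_sum) auto
      ultimately have "even (csum n f (c-1) x)" using tot by simp
      hence "\<forall>m<c. even (csum n f m x)" using ev1
        by (metis Suc_diff_1 c1 less_Suc_eq less_le_trans less_numeral_extra(1))
      thus "x \<in> L" using x(1) L unfolding Dlat_def by auto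
    qed
  next
    show "L \<subseteq> kernel (Dgroup n) (elem2 (c-1)) h"
    proof
      fix x assume "x \<in> L"
      hence x: "x \<in> zvec n" "\<forall>m<c. even (csum n f m x)" using L by auto
      have "even (\<Sum>i<n. x i)" unfolding csum_total[OF fc] using x(2) by (intro dvd_sum) auto
      hence "x \<in> Dlat n" using x(1) by (simp add: Dlat_def)
      moreover have "h x = (\<lambda>_. 0)" using x(2) by (auto simp: h_def fun_eq_iff)
      ultimately show "x \<in> kernel (Dgroup n) (elem2 (c-1)) h"
        by (simp add: kernel_def Dgroup_def elem2_def)
    qed
  qed
  show ?thesis using group_hom.FactGroup_iso[OF gh surj] ker by simp
qed

lemma ev_sym: "ev a z = ev z a"
  by (simp add: ev_def)

lemma even_in:
  assumes two: "\<forall>z<n. (\<lambda>x. 2 * ev z x) \<in> int_span n v"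
  and y: "y \<in> zvec n" "\<forall>z<n. even (y z)"
  shows "y \<in> int_span n v"
proof -
  have "(\<lambda>w. \<Sum>z\<in>{..<n}. (\<lambda>z w. (y z div 2) * (2 * ev z w)) z w) \<in> int_span n v"
    using two by (intro span_sum) (auto intro: span_smult)
  moreover have "\<And>w. (\<Sum>z\<in>{..<n}. (y z div 2) * (2 * ev z w)) = y w"
  proof -
    fix w
    have "(\<Sum>z\<in>{..<n}. (y z div 2) * (2 * ev z w)) = (\<Sum>z\<in>{..<n}. (2 * (y z div 2)) * ev w z)"
      by (intro sum.cong) (auto simp: ev_sym)
    also have "\<dots> = y w" using y zvec_out[OF y(1), of w] by (simp add: sum_ev)
    finally show "(\<Sum>z\<in>{..<n}. (y z div 2) * (2 * ev z w)) = y w" .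
  qed
  ultimately show ?thesis by (rule span_eq)
qed

lemma Char:
  assumes L: "L = int_span n v"
  and vz: "\<forall>j<n. v j \<in> zvec n"
  and two: "\<forall>z<n. (\<lambda>x. 2 * ev z x) \<in> L"
  and fc: "\<forall>i<n. f i < c" and q: "\<forall>m<c. q m < n \<and> f (q m) = m"
  and rep: "\<forall>a<n. (\<lambda>x. ev a x - ev (q (f a)) x) \<in> L"
  and gen: "\<forall>j<n. \<forall>m<c. even (csum n f m (v j))"
  shows "L = {x \<in> zvec n. \<forall>m<c. even (csum n f m x)}"
proof
  show "L \<subseteq> {x \<in> zvec n. \<forall>m<c. even (csum n f m x)}"
  proof
    fix x assume "x \<in> L"
    then obtain d where d: "x = (\<lambda>i. \<Sum>j<n. d j * v j i)" using L unfolding int_span_def by auto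
    have "x \<in> zvec n" using vz unfolding d zvec_def by auto
    moreover have "\<forall>m<c. even (csum n f m x)"
    proof (intro allI impI)
      fix m assume m: "m < c"
      have "csum n f m x = (\<Sum>j<n. d j * csum n f m (v j))"
        unfolding d csum_def by (simp add: sum_distrib_left sum.swap[of _ "{i. i < n \<and> f i = m}"])
      thus "even (csum n f m x)" using gen m by (auto intro!: dvd_sum)
    qed
    ultimately show "x \<in> {x \<in> zvec n. \<forall>m<c. even (csum n f m x)}" by simp
  qed
next
  show "{x \<in> zvec n. \<forall>m<c. even (csum n f m x)} \<subseteq> L"
  proof
    fix x assume "x \<in> {x \<in> zvec n. \<forall>m<c. even (csum n f m x)}"
    hence x: "x \<in> zvec n" "\<forall>m<c. even (csum n f m x)" by auto
    define p where "p = (\<lambda>z. \<Sum>a\<in>{..<n}. (\<lambda>a z. x a * (ev a z - ev (q (f a)) z)) a z)"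
    have pL: "p \<in> L" unfolding p_def L using rep L by (intro span_sum) (auto intro: span_smult)
    define y where "y = (\<lambda>z. \<Sum>a<n. x a * ev (q (f a)) z)"
    have qfn: "\<And>a. a < n \<Longrightarrow> q (f a) < n" using fc q by auto
    have xy: "\<And>z. x z = y z + p z"
    proof -
      fix z
      have "p z = (\<Sum>a<n. x a * ev z a) - y z"
        unfolding p_def y_def by (simp add: right_diff_distrib sum_subtractf ev_sym)
      moreover have "(\<Sum>a<n. x a * ev z a) = x z"
        using zvec_out[OF x(1), of z] by (simp add: sum_ev)
      ultimately show "x z = y z + p z" by simp
    qed
    have yz: "y \<in> zvec n"
      unfolding zvec_def y_def using qfn by (auto simp: ev_def intro!: sum.neutral) (meson leD)
    have ye: "\<forall>z<n. even (y z)"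
    proof (intro allI impI)
      fix z assume z: "z < n"
      have ir: "(\<Sum>a\<in>{..<n} \<inter> {a. q (f a) = z}. x a) = (\<Sum>a<n. if a \<in> {a. q (f a) = z} then x a else 0)"
        by (rule sum.inter_restrict) simp
      have "y z = (\<Sum>a<n. if a \<in> {a. q (f a) = z} then x a else 0)"
        unfolding y_def ev_def by (intro sum.cong) auto
      moreover have "{..<n} \<inter> {a. q (f a) = z} = {a. a < n \<and> q (f a) = z}" by auto
      ultimately have yz': "y z = (\<Sum>a\<in>{a. a < n \<and> q (f a) = z}. x a)" using ir by simp
      show "even (y z)"
      proof (cases "\<exists>m<c. z = q m")
        case True
        then obtain m where m: "m < c" "z = q m" by auto
        have "{a. a < n \<and> q (f a) = z} = {a. a < n \<and> f a = m}"
          using m q fc by (auto, metis)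
        thus ?thesis using yz' x(2) m(1) unfolding csum_def by simp
      next
        case False
        hence "{a. a < n \<and> q (f a) = z} = {}" using fc by auto
        hence "y z = 0" using yz' by (simp only: sum.empty)
        thus ?thesis by simp
      qed
    qed
    have "y \<in> L" using even_in[of n v y] two yz ye L by simp
    hence "(\<lambda>z. y z + p z) \<in> L" using pL L span_add by simp
    thus "x \<in> L" using xy by (metis ext)
  qed
qed

lemma sum_root: "a < n \<Longrightarrow> b < n \<Longrightarrow> (\<Sum>x<n. s x * root a b \<sigma> \<tau> x) = \<sigma> * s a + \<tau> * s b"
proof -
  assume ab: "a < n" "b < n"
  have "\<And>x. s x * root a b \<sigma> \<tau> x = (\<sigma> * s x) * ev a x + (\<tau> * s x) * ev b x"
    by (simp add: root_def algebra_simps)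
  hence "(\<Sum>x<n. s x * root a b \<sigma> \<tau> x) = (\<Sum>x<n. (\<sigma> * s x) * ev a x) + (\<Sum>x<n. (\<tau> * s x) * ev b x)"
    by (simp add: sum.distrib)
  thus ?thesis using ab by (simp add: sum_ev)
qed

lemma root_swap: "root a b \<sigma> \<tau> = root b a \<tau> \<sigma>"
  by (simp add: root_def fun_eq_iff)

lemma two_in_span:
  assumes li: "lin_indep n n v" and i: "i < n"
  and roots: "\<forall>j<n. \<exists>a b \<sigma> \<tau>. a < n \<and> b < n \<and> a \<noteq> b \<and> \<sigma> \<in> {1,-1} \<and> \<tau> \<in> {1,-1} \<and> v j = root a b \<sigma> \<tau>"
  shows "(\<lambda>x. 2 * ev i x) \<in> int_span n v"
proof (rule ccontr)
  let ?L = "int_span n v"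
  assume no: "(\<lambda>x. 2 * ev i x) \<notin> ?L"
  define s where "s a = (if (\<lambda>x. ev i x - ev a x) \<in> ?L then 1 else if (\<lambda>x. ev i x + ev a x) \<in> ?L then -1 else (0::int))" for a
  have K: "\<And>t b. t \<in> {1,-1} \<Longrightarrow> (\<lambda>x. ev i x - t * ev b x) \<in> ?L \<Longrightarrow> s b = t"
  proof -
    fix t b assume t: "t \<in> {1,-1}" and m: "(\<lambda>x. ev i x - t * ev b x) \<in> ?L"
    show "s b = t"
    proof (cases "t = 1")
      case True hence "(\<lambda>x. ev i x - ev b x) \<in> ?L" using m by simp
      thus ?thesis using True by (simp add: s_def)
    next
      case False hence t': "t = -1" using t by auto
      hence p: "(\<lambda>x. ev i x + ev b x) \<in> ?L" using m by simp
      have "(\<lambda>x. ev i x - ev b x) \<notin> ?L"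
      proof
        assume "(\<lambda>x. ev i x - ev b x) \<in> ?L"
        from span_add[OF this p] have "(\<lambda>x. ev i x - ev b x + (ev i x + ev b x)) \<in> ?L" .
        hence "(\<lambda>x. 2 * ev i x) \<in> ?L" by (rule span_eq) simp
        thus False using no by simp
      qed
      thus ?thesis using p t' by (simp add: s_def)
    qed
  qed
  have K2: "\<And>a. s a \<noteq> 0 \<Longrightarrow> (\<lambda>x. ev i x - s a * ev a x) \<in> ?L \<and> s a \<in> {1,-1}"
    by (auto simp: s_def split: if_splits)
  have half: "\<And>a b \<sigma> \<tau>. \<sigma> \<in> {1,-1} \<Longrightarrow> \<tau> \<in> {1,-1} \<Longrightarrow> root a b \<sigma> \<tau> \<in> ?L \<Longrightarrow> s a \<noteq> 0 \<Longrightarrow> \<sigma> * s a + \<tau> * s b = 0"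
  proof -
    fix a b \<sigma> \<tau> assume st: "\<sigma> \<in> {1,-1}" "\<tau> \<in> {1,-1}" and r: "root a b \<sigma> \<tau> \<in> ?L" and sa: "s a \<noteq> 0"
    from K2[OF sa] have e: "(\<lambda>x. ev i x - s a * ev a x) \<in> ?L" "s a \<in> {1,-1}" by auto
    have "(\<lambda>x. (ev i x - s a * ev a x) + (s a * \<sigma>) * root a b \<sigma> \<tau> x) \<in> ?L"
      using span_add[OF e(1) span_smult[OF r]] by simp
    moreover have "\<And>x. (ev i x - s a * ev a x) + (s a * \<sigma>) * root a b \<sigma> \<tau> x = ev i x - (- (s a * \<sigma> * \<tau>)) * ev b x"
      using st e(2) by (auto simp: root_def algebra_simps)
    ultimately have w: "(\<lambda>x. ev i x - (- (s a * \<sigma> * \<tau>)) * ev b x) \<in> ?L" by (rule span_eq)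
    have "- (s a * \<sigma> * \<tau>) \<in> {1,-1}" using st e(2) by auto
    from K[OF this w] have "s b = - (s a * \<sigma> * \<tau>)" .
    moreover have tt: "\<tau> * \<tau> = 1" using st(2) by auto
    moreover have "\<sigma> * s a + \<tau> * (- (s a * \<sigma> * \<tau>)) = \<sigma> * s a * (1 - \<tau> * \<tau>)" by (simp add: algebra_simps)
    ultimately show "\<sigma> * s a + \<tau> * s b = 0" by simp
  qed
  have orth: "\<forall>j<n. (\<Sum>a<n. real_of_int (s a) * real_of_int (v j a)) = 0"
  proof (intro allI impI)
    fix j assume j: "j < n"
    then obtain a b \<sigma> \<tau> where ab: "a < n" "b < n" "\<sigma> \<in> {1,-1}" "\<tau> \<in> {1,-1}" "v j = root a b \<sigma> \<tau>"
      using roots[rule_format, OF j] by blast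
    have r1: "root a b \<sigma> \<tau> \<in> ?L" using span_gen[OF j, of v] ab(5) by metis
    have r: "root a b \<sigma> \<tau> \<in> ?L" "root b a \<tau> \<sigma> \<in> ?L" using r1 root_swap[of a b \<sigma> \<tau>] by metis+
    have z: "\<sigma> * s a + \<tau> * s b = 0"
    proof (cases "s a \<noteq> 0")
      case True thus ?thesis using half[OF ab(3,4) r(1)] by blast
    next
      case False
      show ?thesis
      proof (cases "s b \<noteq> 0")
        case True thus ?thesis using half[OF ab(4,3) r(2)] by linarith
      next
        case False thus ?thesis using \<open>\<not> s a \<noteq> 0\<close> by auto
      qed
    qed
    have "(\<Sum>a<n. s a * v j a) = \<sigma> * s a + \<tau> * s b" unfolding ab(5) by (rule sum_root[OF ab(1,2)])
    hence "(\<Sum>a<n. s a * v j a) = 0" using z by simp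
    hence "real_of_int (\<Sum>a<n. s a * v j a) = 0" by simp
    thus "(\<Sum>a<n. real_of_int (s a) * real_of_int (v j a)) = 0" by (simp only: of_int_sum of_int_mult)
  qed
  have "s i = 1" unfolding s_def using span_zero[of n v] by simp
  hence "\<not> lin_indep n n v" using dep[of i n "\<lambda>a. real_of_int (s a)" v] i orth by simp
  thus False using li by simp
qed



lemma root_csum:
  assumes "a < n" "b < n" "\<sigma> \<in> {1,-1}" "\<tau> \<in> {1,-1}" "f a = f b"
  shows "even (csum n f m (root a b \<sigma> \<tau>))"
proof -
  have "csum n f m (root a b \<sigma> \<tau>) = (\<Sum>i\<in>{i. i < n \<and> f i = m}. \<sigma> * ev a i) + (\<Sum>i\<in>{i. i < n \<and> f i = m}. \<tau> * ev b i)"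
    unfolding csum_def root_def by (simp add: sum.distrib)
  also have "\<dots> = (if f a = m then \<sigma> + \<tau> else 0)"
    using assms by (simp add: sum_ev)
  finally show ?thesis using assms by auto
qed

lemma part1:
  assumes n2: "n \<ge> 2" and mv: "\<forall>j<n. v j \<in> min_vectors n (Dlat n)" and li: "lin_indep n n v"
  shows "\<exists>k \<le> (n-2) div 2. Dgroup n Mod int_span n v \<cong> elem2 k"
proof -
  let ?L = "int_span n v"
  have roots: "\<forall>j<n. \<exists>a b \<sigma> \<tau>. a < n \<and> b < n \<and> a \<noteq> b \<and> \<sigma> \<in> {1,-1} \<and> \<tau> \<in> {1,-1} \<and> v j = root a b \<sigma> \<tau>"
    using min_form[OF n2] mv by blast
  have vz: "\<forall>j<n. v j \<in> zvec n" using mv unfolding min_vectors_def Dlat_def by auto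
  have two: "\<forall>z<n. (\<lambda>x. 2 * ev z x) \<in> ?L" using two_in_span[OF li _ roots] by blast
  define rel where "rel a b \<longleftrightarrow> (\<lambda>x. ev a x - ev b x) \<in> ?L" for a b
  have rrefl: "\<And>a. rel a a" unfolding rel_def using span_zero[of n v] by simp
  have rsym: "\<And>a b. rel a b \<Longrightarrow> rel b a"
  proof -
    fix a b assume "rel a b"
    hence "(\<lambda>x. (-1) * (ev a x - ev b x)) \<in> ?L" unfolding rel_def by (rule span_smult)
    thus "rel b a" unfolding rel_def by (rule span_eq) simp
  qed
  have rtrans: "\<And>a b d. rel a b \<Longrightarrow> rel b d \<Longrightarrow> rel a d"
  proof -
    fix a b d assume "rel a b" "rel b d"
    hence "(\<lambda>x. (ev a x - ev b x) + (ev b x - ev d x)) \<in> ?L" unfolding rel_def by (rule span_add)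
    thus "rel a d" unfolding rel_def by (rule span_eq) simp
  qed
  have rgen: "\<And>a b \<sigma> \<tau>. b < n \<Longrightarrow> \<sigma> \<in> {1,-1} \<Longrightarrow> \<tau> \<in> {1,-1} \<Longrightarrow> root a b \<sigma> \<tau> \<in> ?L \<Longrightarrow> rel a b"
  proof -
    fix a b \<sigma> \<tau> assume b: "b < n" and st: "\<sigma> \<in> {1,-1}" "\<tau> \<in> {1,-1}" and r: "root a b \<sigma> \<tau> \<in> ?L"
    have r2: "(\<lambda>x. 2 * ev b x) \<in> ?L" using two b by simp
    have "(\<lambda>x. \<sigma> * root a b \<sigma> \<tau> x - ((1 + \<sigma>*\<tau>) div 2) * (2 * ev b x)) \<in> ?L"
      using span_diff[OF span_smult[OF r] span_smult[OF r2]] by simp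
    moreover have "\<And>x. \<sigma> * root a b \<sigma> \<tau> x - ((1 + \<sigma>*\<tau>) div 2) * (2 * ev b x) = ev a x - ev b x"
      using st by (auto simp: root_def)
    ultimately show "rel a b" unfolding rel_def by (rule span_eq)
  qed
  have gen_rel: "\<forall>j<n. \<exists>a b \<sigma> \<tau>. a < n \<and> b < n \<and> a \<noteq> b \<and> \<sigma> \<in> {1,-1} \<and> \<tau> \<in> {1,-1} \<and> v j = root a b \<sigma> \<tau> \<and> rel a b"
  proof (intro allI impI)
    fix j assume j: "j < n"
    then obtain a b \<sigma> \<tau> where ab: "a < n" "b < n" "a \<noteq> b" "\<sigma> \<in> {1,-1}" "\<tau> \<in> {1,-1}" "v j = root a b \<sigma> \<tau>"
      using roots[rule_format, OF j] by blast
    have "root a b \<sigma> \<tau> \<in> ?L" using span_gen[OF j, of v] ab(6) by metis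
    hence "rel a b" using rgen ab by blast
    thus "\<exists>a b \<sigma> \<tau>. a < n \<and> b < n \<and> a \<noteq> b \<and> \<sigma> \<in> {1,-1} \<and> \<tau> \<in> {1,-1} \<and> v j = root a b \<sigma> \<tau> \<and> rel a b"
      using ab by blast
  qed
  define r where "r i = (LEAST a. rel a i)" for i
  have r1: "\<And>i. rel (r i) i" unfolding r_def by (rule LeastI[of "\<lambda>a. rel a i" i for i]) (rule rrefl)
  have r2: "\<And>i. r i \<le> i" unfolding r_def by (rule Least_le) (rule rrefl)
  have r3: "\<And>a b. rel a b \<Longrightarrow> r a = r b"
  proof -
    fix a b assume ab: "rel a b"
    have "(\<lambda>x. rel x a) = (\<lambda>x. rel x b)"
    proof (intro ext iffI)
      fix x assume "rel x a" thus "rel x b" using ab rtrans by blast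
    next
      fix x assume "rel x b" thus "rel x a" using rsym[OF ab] rtrans by blast
    qed
    thus "r a = r b" unfolding r_def by simp
  qed
  define R where "R = r ` {..<n}"
  have Rn: "R \<subseteq> {..<n}" using r2 by (auto simp: R_def intro: le_less_trans)
  have finR: "finite R" by (simp add: R_def)
  have Rfix: "\<And>\<rho>. \<rho> \<in> R \<Longrightarrow> r \<rho> = \<rho>"
    using r3[OF r1] unfolding R_def by auto
  have Req: "\<And>\<rho>1 \<rho>2. \<rho>1 \<in> R \<Longrightarrow> \<rho>2 \<in> R \<Longrightarrow> rel \<rho>1 \<rho>2 \<Longrightarrow> \<rho>1 = \<rho>2"
    using r3 Rfix by metis
  define c where "c = card R"
  obtain g where g: "bij_betw g R {0..<c}" using ex_bij_betw_finite_nat[OF finR] c_def by auto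
  define f where "f i = g (r i)" for i
  define q where "q m = inv_into R g m" for m
  have "r 0 \<in> R" using n2 by (auto simp: R_def)
  hence c1: "c \<ge> 1" using finR c_def by (metis One_nat_def Suc_leI card_gt_0_iff empty_iff)
  have rR: "\<And>i. i < n \<Longrightarrow> r i \<in> R" by (simp add: R_def)
  have fc: "\<forall>i<n. f i < c" using g rR unfolding f_def bij_betw_def by auto
  have gR: "g ` R = {0..<c}" using g by (simp add: bij_betw_def)
  have qR: "\<And>m. m < c \<Longrightarrow> q m \<in> R \<and> g (q m) = m"
    unfolding q_def using gR by (auto intro: inv_into_into f_inv_into_f)
  have q: "\<forall>m<c. q m < n \<and> f (q m) = m"
    using qR Rn Rfix unfolding f_def by auto
  have qf: "\<And>a. a < n \<Longrightarrow> q (f a) = r a"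
    unfolding q_def f_def using g rR by (simp add: bij_betw_def inv_into_f_f)
  have rep: "\<forall>a<n. (\<lambda>x. ev a x - ev (q (f a)) x) \<in> ?L"
    using qf rsym[OF r1] unfolding rel_def by simp
  have gen: "\<forall>j<n. \<forall>m<c. even (csum n f m (v j))"
  proof (intro allI impI)
    fix j m assume j: "j < n"
    then obtain a b \<sigma> \<tau> where ab: "a < n" "b < n" "\<sigma> \<in> {1,-1}" "\<tau> \<in> {1,-1}" "v j = root a b \<sigma> \<tau>" "rel a b"
      using gen_rel[rule_format, OF j] by blast
    have "f a = f b" unfolding f_def using r3[OF ab(6)] by simp
    thus "even (csum n f m (v j))" using root_csum[OF ab(1-4)] ab(5) by simp
  qed
  have Lchar: "?L = {x \<in> zvec n. \<forall>m<c. even (csum n f m x)}"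
    by (rule Char[OF refl vz two fc q rep gen])
  have iso: "Dgroup n Mod ?L \<cong> elem2 (c-1)" by (rule Q1[OF c1 fc q Lchar])
  have cls: "\<forall>i<n. \<exists>b<n. b \<noteq> i \<and> rel i b"
  proof (intro allI impI, rule ccontr)
    fix i assume i: "i < n" and no: "\<not> (\<exists>b<n. b \<noteq> i \<and> rel i b)"
    have "\<forall>j<n. (\<Sum>a<n. real_of_int (ev i a) * real_of_int (v j a)) = 0"
    proof (intro allI impI)
      fix j assume j: "j < n"
      then obtain a b \<sigma> \<tau> where ab: "a < n" "b < n" "a \<noteq> b" "v j = root a b \<sigma> \<tau>" "rel a b"
        using gen_rel[rule_format, OF j] by blast
      have "a \<noteq> i" using no ab by blast
      moreover have "b \<noteq> i" using no ab rsym by blast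
      ultimately have vji: "v j i = 0" using ab(4) by (simp add: root_def ev_def)
      have "(\<Sum>a<n. v j a * ev i a) = v j i" using i by (simp add: sum_ev)
      hence "(\<Sum>a<n. ev i a * v j a) = 0" using vji by (simp add: mult.commute)
      hence "real_of_int (\<Sum>a<n. ev i a * v j a) = 0" by simp
      thus "(\<Sum>a<n. real_of_int (ev i a) * real_of_int (v j a)) = 0" by (simp only: of_int_sum of_int_mult)
    qed
    hence "\<not> lin_indep n n v" using dep[of i n "\<lambda>a. real_of_int (ev i a)" v] i by (simp add: ev_def)
    thus False using li by simp
  qed
  then obtain oth where oth: "\<forall>i<n. oth i < n \<and> oth i \<noteq> i \<and> rel i (oth i)" by metis
  define \<phi> where "\<phi> p = (if snd p then oth (fst p) else fst p)" for p :: "nat \<times> bool"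
  have inj: "inj_on \<phi> (R \<times> UNIV)"
  proof (rule inj_onI)
    fix p1 p2 assume p: "p1 \<in> R \<times> UNIV" "p2 \<in> R \<times> UNIV" "\<phi> p1 = \<phi> p2"
    obtain \<rho>1 b1 \<rho>2 b2 where pp: "p1 = (\<rho>1, b1)" "p2 = (\<rho>2, b2)" by fastforce
    have R12: "\<rho>1 \<in> R" "\<rho>2 \<in> R" using p pp by auto
    hence n12: "\<rho>1 < n" "\<rho>2 < n" using Rn by auto
    show "p1 = p2"
    proof (cases b1; cases b2)
      assume "b1" "b2"
      hence "oth \<rho>1 = oth \<rho>2" using p(3) pp by (simp add: \<phi>_def)
      hence "rel \<rho>1 \<rho>2" using oth n12 rsym rtrans by metis
      thus ?thesis using Req R12 pp \<open>b1\<close> \<open>b2\<close> by simp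
    next
      assume "b1" "\<not> b2"
      hence e: "oth \<rho>1 = \<rho>2" using p(3) pp by (simp add: \<phi>_def)
      hence "rel \<rho>1 \<rho>2" using oth n12 by metis
      hence "\<rho>1 = \<rho>2" using Req R12 by simp
      thus ?thesis using e oth n12 by metis
    next
      assume "\<not> b1" "b2"
      hence e: "oth \<rho>2 = \<rho>1" using p(3) pp by (simp add: \<phi>_def)
      hence "rel \<rho>2 \<rho>1" using oth n12 by metis
      hence "\<rho>1 = \<rho>2" using Req R12 by metis
      thus ?thesis using e oth n12 by metis
    next
      assume "\<not> b1" "\<not> b2"
      thus ?thesis using p(3) pp by (simp add: \<phi>_def)
    qed
  qed
  have img: "\<phi> ` (R \<times> UNIV) \<subseteq> {..<n}"
    using Rn oth unfolding \<phi>_def by auto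
  have "card (R \<times> (UNIV :: bool set)) \<le> card {..<n}"
    by (rule card_inj_on_le[OF inj img]) simp
  hence "2 * c \<le> n" using finR by (simp add: card_cartesian_product c_def)
  hence "c - 1 \<le> (n-2) div 2" by linarith
  thus ?thesis using iso by blast
qed

lemma part2:
  assumes n2: "n \<ge> 2" and k: "k \<le> (n-2) div 2"
  shows "\<exists>v. (\<forall>j<n. v j \<in> min_vectors n (Dlat n)) \<and> lin_indep n n v \<and>
            Dgroup n Mod int_span n v \<cong> elem2 k"
proof -
  have kn: "2 * k + 2 \<le> n" using n2 k by linarith
  define v where "v j = (if even j \<and> j \<le> 2*k then root j (j+1) 1 1 else root (j-1) j 1 (-1))" for j
  let ?L = "int_span n v"
  have vA: "\<And>j. even j \<Longrightarrow> j \<le> 2*k \<Longrightarrow> v j = root j (j+1) 1 1"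
    unfolding v_def by (rule if_P) simp
  have vB: "\<And>j. \<not> (even j \<and> j \<le> 2*k) \<Longrightarrow> v j = root (j-1) j 1 (-1)"
    unfolding v_def by (rule if_not_P)
  have mv: "\<forall>j<n. v j \<in> min_vectors n (Dlat n)"
  proof (intro allI impI)
    fix j assume j: "j < n"
    show "v j \<in> min_vectors n (Dlat n)"
    proof (cases "even j \<and> j \<le> 2*k")
      case True thus ?thesis using vA[of j] root_min[of j n "j+1" 1 1] kn by auto
    next
      case False
      hence "j \<noteq> 0" by (auto, presburger)
      thus ?thesis using vB[OF False] root_min[of "j-1" n j 1 "-1"] j by auto
    qed
  qed
  have vz: "\<forall>j<n. v j \<in> zvec n" using mv unfolding min_vectors_def Dlat_def by auto
  have gen: "\<And>j. j < n \<Longrightarrow> v j \<in> ?L" by (rule span_gen)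
  have low: "\<And>z. z \<le> 2*k+1 \<Longrightarrow> (\<lambda>x. 2 * ev z x) \<in> ?L"
  proof -
    fix z assume z: "z \<le> 2*k+1"
    show "(\<lambda>x. 2 * ev z x) \<in> ?L"
    proof (cases "even z")
      case True
      hence z2: "z \<le> 2*k" using z by presburger
      have "\<not> (even (z+1) \<and> z+1 \<le> 2*k)" using True by simp
      hence e1: "v (z+1) = root z (z+1) 1 (-1)" using vB by fastforce
      have e2: "v z = root z (z+1) 1 1" using vA True z2 by simp
      have "z < n" "z + 1 < n" using kn z2 by linarith+
      hence m: "(\<lambda>x. v z x + v (z+1) x) \<in> ?L" using gen span_add by blast
      show ?thesis by (rule span_eq[OF m]) (unfold e1 e2 root_def ev_def, simp)
    next
      case False
      hence z1: "z \<ge> 1" by presburger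
      have e: "even (z-1)" "z - 1 \<le> 2*k" using False z by presburger+
      hence e1: "v (z-1) = root (z-1) z 1 1" using vA z1 by fastforce
      have e2: "v z = root (z-1) z 1 (-1)" using vB False by simp
      have "z < n" "z - 1 < n" using kn z by linarith+
      hence m: "(\<lambda>x. v (z-1) x - v z x) \<in> ?L" using gen span_diff by blast
      show ?thesis by (rule span_eq[OF m]) (unfold e1 e2 root_def ev_def, simp)
    qed
  qed
  have high: "\<And>d. 2*k+1+d < n \<Longrightarrow> (\<lambda>x. 2 * ev (2*k+1+d) x) \<in> ?L"
  proof -
    fix d show "2*k+1+d < n \<Longrightarrow> (\<lambda>x. 2 * ev (2*k+1+d) x) \<in> ?L"
    proof (induction d)
      case 0 thus ?case using low by simp
    next
      case (Suc d)
      let ?z = "2*k+1+Suc d"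
      have "v ?z = root (?z - 1) ?z 1 (-1)" using vB by simp
      hence vz': "v ?z = root (2*k+1+d) ?z 1 (-1)" by simp
      have "(\<lambda>x. 2 * ev (2*k+1+d) x - 2 * v ?z x) \<in> ?L"
        using Suc span_diff span_smult gen by simp
      thus ?case by (rule span_eq) (unfold vz' root_def ev_def, simp)
    qed
  qed
  have two: "\<forall>z<n. (\<lambda>x. 2 * ev z x) \<in> ?L"
  proof (intro allI impI)
    fix z assume z: "z < n"
    show "(\<lambda>x. 2 * ev z x) \<in> ?L"
    proof (cases "z \<le> 2*k+1")
      case True thus ?thesis using low by simp
    next
      case False
      then obtain d where "z = 2*k+1+d" by (metis le_add_diff_inverse nat_le_linear)
      thus ?thesis using high z by simp
    qed
  qed
  have li: "lin_indep n n v" by (rule indep[OF two])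
  define f where "f i = (if i < 2*k then i div 2 else k)" for i
  define q where "q m = 2 * m" for m :: nat
  have fc: "\<forall>i<n. f i < k+1" unfolding f_def by auto
  have q: "\<forall>m<k+1. q m < n \<and> f (q m) = m" unfolding q_def f_def using kn by auto
  have repl: "\<And>a. a < 2*k \<Longrightarrow> (\<lambda>x. ev a x - ev (q (f a)) x) \<in> ?L"
  proof -
    fix a assume a: "a < 2*k"
    show "(\<lambda>x. ev a x - ev (q (f a)) x) \<in> ?L"
    proof (cases "even a")
      case True
      hence "q (f a) = a" using a unfolding q_def f_def by simp
      thus ?thesis using span_zero[of n v] by simp
    next
      case False
      hence qa: "q (f a) = a - 1" using a unfolding q_def f_def by presburger
      have "v a = root (a-1) a 1 (-1)" using vB False by simp
      hence e1: "v a = root (a-1) a 1 (-1)" .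
      have "a < n" using a kn by linarith
      hence m: "(\<lambda>x. (-1) * v a x) \<in> ?L" using gen span_smult by blast
      show ?thesis unfolding qa by (rule span_eq[OF m]) (unfold e1 root_def ev_def, simp)
    qed
  qed
  have reph: "\<And>d. 2*k+d < n \<Longrightarrow> (\<lambda>x. ev (2*k+d) x - ev (2*k) x) \<in> ?L"
  proof -
    fix d show "2*k+d < n \<Longrightarrow> (\<lambda>x. ev (2*k+d) x - ev (2*k) x) \<in> ?L"
    proof (induction d)
      case 0 thus ?case using span_zero[of n v] by simp
    next
      case (Suc d)
      let ?z = "2*k+Suc d"
      have "v ?z = root (?z - 1) ?z 1 (-1)" using vB by simp
      hence vz': "v ?z = root (2*k+d) ?z 1 (-1)" by simp
      have "(\<lambda>x. (ev (2*k+d) x - ev (2*k) x) - v ?z x) \<in> ?L"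
        using Suc span_diff gen by simp
      thus ?case by (rule span_eq) (unfold vz' root_def ev_def, simp)
    qed
  qed
  have rep: "\<forall>a<n. (\<lambda>x. ev a x - ev (q (f a)) x) \<in> ?L"
  proof (intro allI impI)
    fix a assume a: "a < n"
    show "(\<lambda>x. ev a x - ev (q (f a)) x) \<in> ?L"
    proof (cases "a < 2*k")
      case True thus ?thesis using repl by simp
    next
      case False
      hence "q (f a) = 2*k" unfolding q_def f_def by simp
      moreover obtain d where "a = 2*k+d" using False by (metis le_add_diff_inverse not_less)
      ultimately show ?thesis using reph a by simp
    qed
  qed
  have genc: "\<forall>j<n. \<forall>m<k+1. even (csum n f m (v j))"
  proof (intro allI impI)
    fix j m assume j: "j < n"
    show "even (csum n f m (v j))"
    proof (cases "even j \<and> j \<le> 2*k")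
      case True
      have "f j = f (j+1)" unfolding f_def using True by presburger
      thus ?thesis using vA[of j] True root_csum[of j n "j+1" 1 1 f m] kn by auto
    next
      case False
      have "f (j-1) = f j" unfolding f_def using False by presburger
      moreover have "j \<noteq> 0" using False by (auto, presburger)
      ultimately show ?thesis using vB[OF False] root_csum[of "j-1" n j 1 "-1" f m] j by auto
    qed
  qed
  have Lchar: "?L = {x \<in> zvec n. \<forall>m<k+1. even (csum n f m x)}"
    by (rule Char[OF refl vz two fc q rep genc])
  have "Dgroup n Mod ?L \<cong> elem2 (k+1-1)" by (rule Q1[OF _ fc q Lchar]) simp
  thus ?thesis using mv li by auto
qed


theorem mainTheorem6:
  fixes n :: nat
  assumes "n \<ge> 2"
  defines "t \<equiv> (n - 2) div 2"
  shows "(\<forall>v. (\<forall>j<n. v j \<in> min_vectors n (Dlat n)) \<and> lin_indep n n v \<longrightarrow>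
            (\<exists>k\<le>t. Dgroup n Mod int_span n v \<cong> elem2 k))
       \<and> (\<forall>k\<le>t. \<exists>v. (\<forall>j<n. v j \<in> min_vectors n (Dlat n)) \<and> lin_indep n n v \<and>
            Dgroup n Mod int_span n v \<cong> elem2 k)"
  using part1[OF assms(1)] part2[OF assms(1)] unfolding t_def by blast

end
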